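(* Let $n\ge2$, $d\ge1$, $r\ge3$ with $dr=n$. For every vertex $(a,x)$ of $Q_n(d,r)$ with $x\in\{0,\dots,r-1\}$, the distance between $(0_n,0)$ and $(a,x)$ in $Q_n(d,r)$ is $$\mathrm{dist}((0_n,0),(a,x))=\|a\|+\min\{\,r+x-2\,\mathrm{leap}_1(a,x),\; 2r-x-2\,\mathrm{leap}_2(a,x)\,\}.$$
   Context: $\mathbb{Z}_2^n=\{0,1\}^n$ with coordinatewise addition mod 2; $e_i$ is the $i$-th standard basis vector, subscripts read modulo $n$; $\|a\|$ is the Hamming weight. The recursive cube of rings $Q_n(d,r)$ (for $n\ge d$, $dr\equiv0\pmod n$) is the simple graph on $\mathbb{Z}_2^n\times\mathbb{Z}_r$ in which $(a,x)$ is adjacent to $(a+e_{i+dx},x)$ for $1\le i\le d$ and to $(a,x\pm1)$. Definition of the leaps (case $dr=n$): for $(a,x)$ with $x\in\{0,\dots,r-1\}$, let $L$ be the non-decreasing list obtained by sorting the multiset consisting of $0$, $x$, $r$, and the numbers $\lfloor (i-1)/d\rfloor$ for each $i\in\{1,\dots,n\}$ with $a_i=1$. Then $\mathrm{leap}_1(a,x)=0$ if $x=0$, and otherwise $\mathrm{leap}_1(a,x)$ is the maximum difference between two consecutive entries of $L$ that are both $\le x$; $\mathrm{leap}_2(a,x)$ is the maximum difference between two consecutive entries of $L$ that are both $\ge x$. *)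

theory Defs
  imports Main
begin

text \<open>A vector a in Z_2^n is represented by its support, a subset of {1..n}
  (a_i = 1 iff i is in the set). Adding e_j is symmetric difference with {j};
  the Hamming weight is the cardinality.\<close>

definition idx :: "nat \<Rightarrow> nat \<Rightarrow> nat" where
  "idx n j = (j + n - 1) mod n + 1"   \<comment> \<open>subscript j read modulo n, in {1..n}\<close>

definition qvertex :: "nat \<Rightarrow> nat \<Rightarrow> nat set \<times> nat \<Rightarrow> bool" where
  "qvertex n r v \<longleftrightarrow> fst v \<subseteq> {1..n} \<and> snd v < r"

definition qadj :: "nat \<Rightarrow> nat \<Rightarrow> nat \<Rightarrow> nat set \<times> nat \<Rightarrow> nat set \<times> nat \<Rightarrow> bool" where
  "qadj n d r u v \<longleftrightarrow> qvertex n r u \<and> qvertex n r v \<and>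
     ((snd v = snd u \<and> (\<exists>i\<in>{1..d}. fst v = fst u - {idx n (i + d * snd u)} \<union> ({idx n (i + d * snd u)} - fst u)))
      \<or> (fst v = fst u \<and> (snd v = (snd u + 1) mod r \<or> snd u = (snd v + 1) mod r)))"

fun qwalk :: "nat \<Rightarrow> nat \<Rightarrow> nat \<Rightarrow> nat \<Rightarrow> nat set \<times> nat \<Rightarrow> nat set \<times> nat \<Rightarrow> bool" where
  "qwalk n d r 0 u v \<longleftrightarrow> u = v \<and> qvertex n r u"
| "qwalk n d r (Suc k) u v \<longleftrightarrow> (\<exists>w. qadj n d r u w \<and> qwalk n d r k w v)"

definition qdist :: "nat \<Rightarrow> nat \<Rightarrow> nat \<Rightarrow> nat set \<times> nat \<Rightarrow> nat set \<times> nat \<Rightarrow> nat" where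
  "qdist n d r u v = (LEAST k. qwalk n d r k u v)"

definition leapL :: "nat \<Rightarrow> nat \<Rightarrow> nat set \<Rightarrow> nat \<Rightarrow> nat list" where
  "leapL d r a x = sort ([0, x, r] @ map (\<lambda>i. (i - 1) div d) (sorted_list_of_set a))"

definition leap1 :: "nat \<Rightarrow> nat \<Rightarrow> nat set \<Rightarrow> nat \<Rightarrow> nat" where
  "leap1 d r a x = (if x = 0 then 0 else
     (let L = leapL d r a x in
      Max {L ! (j+1) - L ! j | j. j + 1 < length L \<and> L ! j \<le> x \<and> L ! (j+1) \<le> x}))"

definition leap2 :: "nat \<Rightarrow> nat \<Rightarrow> nat set \<Rightarrow> nat \<Rightarrow> nat" where
  "leap2 d r a x = (let L = leapL d r a x in
      Max {L ! (j+1) - L ! j | j. j + 1 < length L \<and> x \<le> L ! j \<and> x \<le> L ! (j+1)})"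

end

theory Submission
  imports Defs
begin


definition gapfree :: "nat set \<Rightarrow> nat \<Rightarrow> nat \<Rightarrow> bool" where
  "gapfree P t k \<longleftrightarrow> (\<forall>s\<in>P. \<not> (t < s \<and> s < t + k))"

definition KS :: "nat set \<Rightarrow> nat \<Rightarrow> nat \<Rightarrow> nat set" where
  "KS P lo hi = {k. \<exists>t. lo \<le> t \<and> t + k \<le> hi \<and> gapfree P t k}"

definition Mx :: "nat set \<Rightarrow> nat \<Rightarrow> nat \<Rightarrow> nat" where
  "Mx P lo hi = Max (KS P lo hi)"

lemma KS_fin: "finite (KS P lo hi)"
  by (rule finite_subset[of _ "{..hi}"]) (auto simp: KS_def)

lemma KS_ne: "lo \<le> hi \<Longrightarrow> KS P lo hi \<noteq> {}"
proof -
  assume "lo \<le> hi"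
  hence "0 \<in> KS P lo hi" by (auto simp: KS_def gapfree_def)
  thus ?thesis by blast
qed

lemma Mx_ge: "lo \<le> t \<Longrightarrow> t + k \<le> hi \<Longrightarrow> gapfree P t k \<Longrightarrow> k \<le> Mx P lo hi"
  unfolding Mx_def by (rule Max_ge[OF KS_fin]) (auto simp: KS_def)

lemma Mx_wit: assumes "lo \<le> hi"
  shows "\<exists>t. lo \<le> t \<and> t + Mx P lo hi \<le> hi \<and> gapfree P t (Mx P lo hi)"
proof -
  have "Mx P lo hi \<in> KS P lo hi" unfolding Mx_def by (rule Max_in[OF KS_fin KS_ne[OF assms]])
  thus ?thesis by (auto simp: KS_def)
qed

lemma Mx_le: "lo \<le> hi \<Longrightarrow> Mx P lo hi + lo \<le> hi"
  using Mx_wit[of lo hi P] by auto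

lemma Mx_ge1: "lo < hi \<Longrightarrow> 1 \<le> Mx P lo hi"
  by (rule Mx_ge[of lo lo]) (auto simp: gapfree_def)

lemma gapfree_sub: "gapfree P t k \<Longrightarrow> t \<le> t' \<Longrightarrow> t' + k' \<le> t + k \<Longrightarrow> gapfree P t' k'"
  unfolding gapfree_def by (metis add_le_mono le_trans less_le_trans not_le)

lemma Mx_mono_hi: assumes "lo \<le> hi" "hi \<le> hi'" shows "Mx P lo hi \<le> Mx P lo hi'"
proof -
  obtain t where "lo \<le> t" "t + Mx P lo hi \<le> hi" "gapfree P t (Mx P lo hi)"
    using Mx_wit[of lo hi P] assms by auto
  thus ?thesis using Mx_ge[of lo t "Mx P lo hi" hi' P] assms by auto
qed

lemma Mx_hi_Suc: assumes "lo \<le> hi" shows "Mx P lo (Suc hi) \<le> Mx P lo hi + 1"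
proof -
  obtain t where t: "lo \<le> t" "t + Mx P lo (Suc hi) \<le> Suc hi" "gapfree P t (Mx P lo (Suc hi))"
    using Mx_wit[of lo "Suc hi" P] assms by auto
  show ?thesis
  proof (cases "t + Mx P lo (Suc hi) \<le> hi")
    case True thus ?thesis using Mx_ge[OF t(1) True t(3)] by simp
  next
    case False
    show ?thesis
    proof (cases "Mx P lo (Suc hi) = 0")
      case True thus ?thesis by simp
    next
    case F2: False
    have "gapfree P t (Mx P lo (Suc hi) - 1)" by (rule gapfree_sub[OF t(3)]) auto
    moreover have "t + (Mx P lo (Suc hi) - 1) \<le> hi" using t False F2 by auto
    ultimately show ?thesis using Mx_ge[OF t(1)] by fastforce
  qed
  qed
qed

lemma Mx_mono_lo: assumes "lo \<le> lo'" "lo' \<le> hi" shows "Mx P lo' hi \<le> Mx P lo hi"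
proof -
  obtain t where "lo' \<le> t" "t + Mx P lo' hi \<le> hi" "gapfree P t (Mx P lo' hi)"
    using Mx_wit[of lo' hi P] assms by auto
  thus ?thesis using Mx_ge[of lo t "Mx P lo' hi" hi P] assms by auto
qed

lemma Mx_lo_Suc: assumes "Suc lo \<le> hi" shows "Mx P lo hi \<le> Mx P (Suc lo) hi + 1"
proof -
  obtain t where t: "lo \<le> t" "t + Mx P lo hi \<le> hi" "gapfree P t (Mx P lo hi)"
    using Mx_wit[of lo hi P] assms by auto
  show ?thesis
  proof (cases "Suc lo \<le> t")
    case True thus ?thesis using Mx_ge[OF True t(2) t(3)] by simp
  next
    case False
    hence tl: "t = lo" using t by auto
    show ?thesis
    proof (cases "Mx P lo hi = 0")
      case True thus ?thesis by simp
    next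
      case False
      have "gapfree P (Suc lo) (Mx P lo hi - 1)" by (rule gapfree_sub[OF t(3)]) (use tl False in auto)
      moreover have "Suc lo + (Mx P lo hi - 1) \<le> hi" using t False tl by auto
      ultimately show ?thesis using Mx_ge[of "Suc lo" "Suc lo"] by fastforce
    qed
  qed
qed

lemma KS_cong: "(\<And>t k. lo \<le> t \<Longrightarrow> t + k \<le> hi \<Longrightarrow> gapfree P t k = gapfree Q t k) \<Longrightarrow>
   Mx P lo hi = Mx Q lo hi"
  unfolding Mx_def KS_def by (rule arg_cong[where f=Max]) blast

lemma Mx_ins_hi: "Mx (insert hi P) lo hi = Mx P lo hi"
  by (rule KS_cong) (auto simp: gapfree_def)

lemma Mx_ins_lo: "Mx (insert lo P) lo hi = Mx P lo hi"
  by (rule KS_cong) (auto simp: gapfree_def)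

lemma gaps_Max:
  fixes L :: "nat list"
  assumes srt: "sorted L" and lo: "lo \<in> set L" and hi: "hi \<in> set L" and lh: "lo < hi"
  shows "Max {L!(j+1) - L!j | j. j+1 < length L \<and> lo \<le> L!j \<and> L!(j+1) \<le> hi} = Mx (set L) lo hi"
proof -
  define G where "G = {L!(j+1) - L!j | j. j+1 < length L \<and> lo \<le> L!j \<and> L!(j+1) \<le> hi}"
  have finG: "finite G"
    by (rule finite_subset[of _ "(\<lambda>j. L!(j+1) - L!j) ` {..<length L}"]) (auto simp: G_def)
  have sub: "g \<in> KS (set L) lo hi" if gG: "g \<in> G" for g
  proof -
    obtain j where j: "g = L!(j+1) - L!j" "j+1 < length L" "lo \<le> L!j" "L!(j+1) \<le> hi"
      using gG unfolding G_def by blast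
    have mono: "L!j \<le> L!(j+1)" using sorted_nth_mono[OF srt, of j "j+1"] j by auto
    have "gapfree (set L) (L!j) g"
      unfolding gapfree_def
    proof
      fix s assume "s \<in> set L"
      then obtain i where i: "i < length L" "s = L!i" by (auto simp: in_set_conv_nth)
      show "\<not> (L!j < s \<and> s < L!j + g)"
      proof (cases "i \<le> j")
        case True thus ?thesis using sorted_nth_mono[OF srt True] j i by auto
      next
        case False hence "j+1 \<le> i" by simp
        thus ?thesis using sorted_nth_mono[OF srt, of "j+1" i] j i mono by auto
      qed
    qed
    thus ?thesis unfolding KS_def using j mono by (intro CollectI exI[of _ "L!j"]) auto
  qed
  have cover: "\<exists>g\<in>G. k \<le> g" if t: "lo \<le> t" "t < hi" "t + k \<le> hi" "gapfree (set L) t k" for t k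
  proof -
    define I where "I = {i. i < length L \<and> L!i \<le> t}"
    obtain i0 where i0: "i0 < length L" "L!i0 = lo" using lo by (auto simp: in_set_conv_nth)
    obtain ih where ih: "ih < length L" "L!ih = hi" using hi by (auto simp: in_set_conv_nth)
    have finI: "finite I" unfolding I_def by auto
    have i0I: "i0 \<in> I" using i0 t unfolding I_def by auto
    define j where "j = Max I"
    have jI: "j \<in> I" unfolding j_def using Max_in[OF finI] i0I by blast
    have i0j: "i0 \<le> j" unfolding j_def using Max_ge[OF finI i0I] .
    have jih: "j < ih"
    proof (rule ccontr)
      assume "\<not> j < ih" hence "ih \<le> j" by simp
      hence "L!ih \<le> L!j" using sorted_nth_mono[OF srt] jI unfolding I_def by auto
      thus False using jI ih t unfolding I_def by auto
    qed
    have j1: "j+1 < length L" using jih ih by auto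
    have "j + 1 \<notin> I" unfolding j_def using Max_ge[OF finI] by (metis Suc_eq_plus1 j_def not_less_eq_eq order_refl)
    hence gt: "t < L!(j+1)" using j1 unfolding I_def by auto
    have le_hi: "L!(j+1) \<le> hi" using sorted_nth_mono[OF srt, of "j+1" ih] jih ih by auto
    have ge_lo: "lo \<le> L!j" using sorted_nth_mono[OF srt i0j] jI i0 unfolding I_def by auto
    have "L!(j+1) \<in> set L" using j1 by auto
    hence "t + k \<le> L!(j+1)" using t(4) gt unfolding gapfree_def by force
    moreover have "L!j \<le> t" using jI unfolding I_def by auto
    ultimately have "k \<le> L!(j+1) - L!j" by auto
    moreover have "L!(j+1) - L!j \<in> G" unfolding G_def using j1 ge_lo le_hi by blast
    ultimately show ?thesis by blast
  qed
  have Gne: "G \<noteq> {}" using cover[of lo 0] lh by (auto simp: gapfree_def)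
  have "Max G \<le> Mx (set L) lo hi"
    unfolding Mx_def by (rule Max_ge[OF KS_fin sub[OF Max_in[OF finG Gne]]])
  moreover have "Mx (set L) lo hi \<le> Max G"
  proof -
    obtain t where t: "lo \<le> t" "t + Mx (set L) lo hi \<le> hi" "gapfree (set L) t (Mx (set L) lo hi)"
      using Mx_wit[of lo hi "set L"] lh by auto
    show ?thesis
    proof (cases "Mx (set L) lo hi = 0")
      case True thus ?thesis by simp
    next
      case False
      then obtain g where "g \<in> G" "Mx (set L) lo hi \<le> g" using cover[OF t(1) _ t(2,3)] t by force
      thus ?thesis using Max_ge[OF finG] by fastforce
    qed
  qed
  ultimately show ?thesis unfolding G_def by simp
qed



definition gA :: "nat \<Rightarrow> nat set \<Rightarrow> nat \<Rightarrow> int" where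
  "gA r P x = int r + int x - 2 * int (Mx P 0 x)"
definition gB :: "nat \<Rightarrow> nat set \<Rightarrow> nat \<Rightarrow> int" where
  "gB r P x = 2 * int r - int x - 2 * int (Mx P x r)"
definition gg :: "nat \<Rightarrow> nat set \<Rightarrow> nat \<Rightarrow> int" where
  "gg r P x = min (gA r P x) (gB r P x)"

lemma gg_nonneg: assumes "x \<le> r" shows "0 \<le> gg r P x"
proof -
  have "Mx P 0 x + 0 \<le> x" by (rule Mx_le) simp
  moreover have "Mx P x r + x \<le> r" by (rule Mx_le) (rule assms)
  ultimately show ?thesis unfolding gg_def gA_def gB_def by simp
qed

lemma lip_step: assumes "Suc x < r" shows "\<bar>gg r P (Suc x) - gg r P x\<bar> \<le> 1"
proof -
  have a1: "Mx P 0 x \<le> Mx P 0 (Suc x)" by (rule Mx_mono_hi) auto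
  have a2: "Mx P 0 (Suc x) \<le> Mx P 0 x + 1" by (rule Mx_hi_Suc) auto
  have b1: "Mx P (Suc x) r \<le> Mx P x r" by (rule Mx_mono_lo) (use assms in auto)
  have b2: "Mx P x r \<le> Mx P (Suc x) r + 1" by (rule Mx_lo_Suc) (use assms in auto)
  show ?thesis using a1 a2 b1 b2 unfolding gg_def gA_def gB_def by (auto simp: min_def)
qed

lemma lip_wrap: assumes "2 \<le> r" shows "\<bar>gg r P 0 - gg r P (r - 1)\<bar> \<le> 1"
proof -
  have z: "Mx P 0 0 = 0" using Mx_le[of 0 0 P] by simp
  have o1: "1 \<le> Mx P (r-1) r" by (rule Mx_ge1) (use assms in auto)
  have o2: "Mx P (r-1) r + (r - 1) \<le> r" by (rule Mx_le) auto
  have a1: "Mx P 0 (r-1) \<le> Mx P 0 r" by (rule Mx_mono_hi) auto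
  have a2: "Mx P 0 (Suc (r-1)) \<le> Mx P 0 (r-1) + 1" by (rule Mx_hi_Suc) auto
  hence a2': "Mx P 0 r \<le> Mx P 0 (r-1) + 1" using assms by simp
  have o: "Mx P (r-1) r = 1" using o1 o2 assms by simp
  show ?thesis using a1 a2' z o assms unfolding gg_def gA_def gB_def by (auto simp: min_def)
qed

lemma lip: assumes "y < r" "2 \<le> r" shows "\<bar>gg r P ((y+1) mod r) - gg r P y\<bar> \<le> 1"
proof (cases "Suc y < r")
  case True thus ?thesis using lip_step[OF True] by simp
next
  case False
  hence "y = r - 1" using assms by auto
  thus ?thesis using lip_wrap[OF assms(2), of P] assms by (simp add: abs_minus_commute)
qed

lemma gg_insert: "gg r (insert x P) x = gg r P x"
  unfolding gg_def gA_def gB_def by (simp add: Mx_ins_hi Mx_ins_lo)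

lemma gapfree_ext_hi: "gapfree P t k \<Longrightarrow> t + k \<notin> P \<Longrightarrow> gapfree P t (Suc k)"
  unfolding gapfree_def
proof (intro ballI notI)
  fix s assume "\<forall>s\<in>P. \<not> (t < s \<and> s < t + k)" "t + k \<notin> P" "s \<in> P" "t < s \<and> s < t + Suc k"
  thus False by (cases "s = t + k") auto
qed

lemma gapfree_ext_lo: "gapfree P t k \<Longrightarrow> t \<notin> P \<Longrightarrow> 0 < t \<Longrightarrow> gapfree P (t - 1) (Suc k)"
  unfolding gapfree_def
proof (intro ballI notI)
  fix s assume "\<forall>s\<in>P. \<not> (t < s \<and> s < t + k)" "t \<notin> P" "0 < t" "s \<in> P" "t - 1 < s \<and> s < t - 1 + Suc k"
  thus False by (cases "s = t") auto
qed

lemma descent: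
  assumes xr: "x < r" and r3: "3 \<le> r" and xP: "x \<notin> P" and Pr: "P \<subseteq> {..<r}"
    and nt: "\<not> (P = {} \<and> x = 0)"
  shows "\<exists>x'. x' < r \<and> (x' = (x+1) mod r \<or> x = (x'+1) mod r) \<and> gg r P x' \<le> gg r P x - 1"
proof (cases "gA r P x \<le> gB r P x")
  case True
  hence gx: "gg r P x = gA r P x" unfolding gg_def by simp
  define k where "k = Mx P 0 x"
  obtain t where t: "t + k \<le> x" "gapfree P t k" using Mx_wit[of 0 x P] unfolding k_def by auto
  consider "t + k < x" | "t + k = x" "x + 1 < r" | "t + k = x" "x + 1 = r" using t xr by linarith
  thus ?thesis
  proof cases
    case 1
    have "k \<le> Mx P 0 (x-1)" by (rule Mx_ge[OF _ _ t(2)]) (use 1 in auto)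
    hence "gA r P (x-1) \<le> gA r P x - 1" using 1 unfolding gA_def k_def by auto
    moreover have "x = (x - 1 + 1) mod r" using 1 xr by auto
    ultimately show ?thesis using gx xr unfolding gg_def by (intro exI[of _ "x-1"]) auto
  next
    case 2
    have "gapfree P t (Suc k)" by (rule gapfree_ext_hi[OF t(2)]) (use 2 xP in auto)
    hence "Suc k \<le> Mx P 0 (x+1)" by (rule Mx_ge[rotated 2]) (use 2 in auto)
    hence "gA r P (x+1) \<le> gA r P x - 1" using 2 unfolding gA_def k_def by auto
    thus ?thesis using gx 2 unfolding gg_def by (intro exI[of _ "x+1"]) auto
  next
    case 3
    have "gapfree P t (Suc k)" by (rule gapfree_ext_hi[OF t(2)]) (use 3 xP in auto)
    hence "Suc k \<le> Mx P 0 r" by (rule Mx_ge[rotated 2]) (use 3 in auto)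
    hence "gB r P 0 \<le> gA r P x - 1" using 3 unfolding gA_def gB_def k_def by auto
    thus ?thesis using gx 3 r3 unfolding gg_def by (intro exI[of _ 0]) auto
  qed
next
  case False
  hence gx: "gg r P x = gB r P x" unfolding gg_def by simp
  define k where "k = Mx P x r"
  obtain t where t: "x \<le> t" "t + k \<le> r" "gapfree P t k" using Mx_wit[of x r P] xr unfolding k_def by auto
  have k1: "1 \<le> k" unfolding k_def by (rule Mx_ge1[OF xr])
  consider "x < t" | "t = x" "0 < x" | "t = x" "x = 0" using t by linarith
  thus ?thesis
  proof cases
    case 1
    have "k \<le> Mx P (x+1) r" by (rule Mx_ge[OF _ _ t(3)]) (use 1 t in auto)
    hence "gB r P (x+1) \<le> gB r P x - 1" unfolding gB_def k_def by auto
    moreover have "x + 1 < r" using 1 t k1 by auto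
    ultimately show ?thesis using gx unfolding gg_def by (intro exI[of _ "x+1"]) auto
  next
    case 2
    have "gapfree P (t-1) (Suc k)" by (rule gapfree_ext_lo[OF t(3)]) (use 2 xP in auto)
    hence "Suc k \<le> Mx P (x-1) r" by (rule Mx_ge[rotated 2]) (use 2 t in auto)
    hence "gB r P (x-1) \<le> gB r P x - 1" using 2 unfolding gB_def k_def by auto
    moreover have "x = (x - 1 + 1) mod r" using 2 xr by auto
    ultimately show ?thesis using gx xr unfolding gg_def by (intro exI[of _ "x-1"]) auto
  next
    case 3
    have kr: "k \<noteq> r"
    proof
      assume "k = r"
      hence "P = {}" using t(3) 3 Pr xP unfolding gapfree_def by fastforce
      thus False using nt 3 by simp
    qed
    have "k \<le> Mx P 0 (r-1)" by (rule Mx_ge[OF _ _ t(3)]) (use 3 t kr in auto)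
    hence "gA r P (r-1) \<le> gB r P x - 1" using 3 r3 unfolding gA_def gB_def k_def by auto
    moreover have "x = (r - 1 + 1) mod r" using 3 r3 by auto
    ultimately show ?thesis using gx r3 unfolding gg_def by (intro exI[of _ "r-1"]) auto
  qed
qed

definition blocks :: "nat \<Rightarrow> nat set \<Rightarrow> nat set" where
  "blocks d a = (\<lambda>i. (i - 1) div d) ` a"

lemma set_leapL: "finite a \<Longrightarrow> set (leapL d r a x) = insert 0 (insert x (insert r (blocks d a)))"
  unfolding leapL_def blocks_def set_sort by auto

lemma leap1_eq: assumes fa: "finite a" and B: "blocks d a \<subseteq> {..<r}" and xr: "x < r"
  shows "leap1 d r a x = Mx (blocks d a) 0 x"
proof (cases "x = 0")
  case True thus ?thesis using Mx_le[of 0 0 "blocks d a"] by (simp add: leap1_def)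
next
  case False
  define L where "L = leapL d r a x"
  have srt: "sorted L" unfolding L_def leapL_def by (rule sorted_sort)
  have sL: "set L = insert 0 (insert x (insert r (blocks d a)))" unfolding L_def using set_leapL[OF fa] by simp
  have eqset: "{L ! (j+1) - L ! j | j. j + 1 < length L \<and> L ! j \<le> x \<and> L ! (j+1) \<le> x}
     = {L!(j+1) - L!j | j. j+1 < length L \<and> 0 \<le> L!j \<and> L!(j+1) \<le> x}"
  proof -
    have mono: "\<And>j. j + 1 < length L \<Longrightarrow> L!j \<le> L!(j+1)" using sorted_nth_mono[OF srt] by auto
    have eqc: "\<And>j. (j + 1 < length L \<and> L ! j \<le> x \<and> L ! (j+1) \<le> x) \<longleftrightarrow> (j+1 < length L \<and> 0 \<le> L!j \<and> L!(j+1) \<le> x)"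
      using mono le_trans by blast
    show ?thesis by (simp only: eqc)
  qed
  have "Max {L!(j+1) - L!j | j. j+1 < length L \<and> 0 \<le> L!j \<and> L!(j+1) \<le> x} = Mx (set L) 0 x"
    by (rule gaps_Max[OF srt]) (use sL False in auto)
  also have "\<dots> = Mx (blocks d a) 0 x" unfolding sL
    by (rule KS_cong) (use xr in \<open>auto simp: gapfree_def\<close>)
  finally show ?thesis using False unfolding leap1_def Let_def L_def[symmetric] eqset by simp
qed

lemma leap2_eq: assumes fa: "finite a" and B: "blocks d a \<subseteq> {..<r}" and xr: "x < r"
  shows "leap2 d r a x = Mx (blocks d a) x r"
proof -
  define L where "L = leapL d r a x"
  have srt: "sorted L" unfolding L_def leapL_def by (rule sorted_sort)
  have sL: "set L = insert 0 (insert x (insert r (blocks d a)))" unfolding L_def using set_leapL[OF fa] by simp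
  have allr: "\<And>y. y \<in> set L \<Longrightarrow> y \<le> r" using sL B xr by auto
  have eqset: "{L ! (j+1) - L ! j | j. j + 1 < length L \<and> x \<le> L ! j \<and> x \<le> L ! (j+1)}
     = {L!(j+1) - L!j | j. j+1 < length L \<and> x \<le> L!j \<and> L!(j+1) \<le> r}"
  proof -
    have "\<And>j. j + 1 < length L \<Longrightarrow> L!j \<le> L!(j+1)" using sorted_nth_mono[OF srt] by auto
    moreover have "\<And>j. j + 1 < length L \<Longrightarrow> L!(j+1) \<le> r" using allr by auto
    ultimately have eqc: "\<And>j. (j + 1 < length L \<and> x \<le> L ! j \<and> x \<le> L ! (j+1)) \<longleftrightarrow> (j+1 < length L \<and> x \<le> L!j \<and> L!(j+1) \<le> r)"
      using le_trans by blast
    show ?thesis by (simp only: eqc)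
  qed
  have "Max {L!(j+1) - L!j | j. j+1 < length L \<and> x \<le> L!j \<and> L!(j+1) \<le> r} = Mx (set L) x r"
    by (rule gaps_Max[OF srt]) (use sL xr in auto)
  also have "\<dots> = Mx (blocks d a) x r" unfolding sL
    by (rule KS_cong) (use xr in \<open>auto simp: gapfree_def\<close>)
  finally show ?thesis unfolding leap2_def Let_def L_def[symmetric] eqset by simp
qed



definition FF :: "nat \<Rightarrow> nat \<Rightarrow> nat set \<times> nat \<Rightarrow> int" where
  "FF d r v = int (card (fst v)) + gg r (blocks d (fst v)) (snd v)"

lemma idx_id: assumes "1 \<le> j" "j \<le> n" shows "idx n j = j"
proof -
  have h: "j + n - 1 = (j - 1) + n" using assms by simp
  have "(j + n - 1) mod n = ((j - 1) + n) mod n" unfolding h ..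
  also have "\<dots> = (j - 1) mod n" by (rule mod_add_self2)
  also have "\<dots> = j - 1" using assms by simp
  finally show ?thesis unfolding idx_def using assms by simp
qed

lemma blocks_sub: assumes "a \<subseteq> {1..n}" "d * r = n" "1 \<le> d" shows "blocks d a \<subseteq> {..<r}"
proof
  fix y assume "y \<in> blocks d a"
  then obtain i where i: "i \<in> a" "y = (i - 1) div d" unfolding blocks_def by auto
  have "i \<le> n" "1 \<le> i" using i assms by auto
  hence "i - 1 < r * d" using assms by (simp add: mult.commute)
  thus "y \<in> {..<r}" using i less_mult_imp_div_less by auto
qed

lemma blk: fixes i d x :: nat assumes "1 \<le> i" "i \<le> d" shows "(i + d * x - 1) div d = x"
proof -
  have "i + d * x - 1 = (i - 1) + d * x" using assms by linarith
  moreover have "((i - 1) + d * x) div d = x + (i - 1) div d" by (rule div_mult_self2) (use assms in auto)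
  moreover have "(i - 1) div d = 0" using assms by simp
  ultimately show ?thesis by simp
qed

lemma blocks_flip: "(c - 1) div d = x \<Longrightarrow>
   insert x (blocks d (A - {c} \<union> ({c} - A))) = insert x (blocks d A)"
  unfolding blocks_def by auto

lemma FF_flip: assumes "(c - 1) div d = x" "finite A"
  shows "gg r (blocks d (A - {c} \<union> ({c} - A))) x = gg r (blocks d A) x"
proof -
  have "gg r (blocks d (A - {c} \<union> ({c} - A))) x = gg r (insert x (blocks d (A - {c} \<union> ({c} - A)))) x"
    by (simp only: gg_insert)
  also have "\<dots> = gg r (insert x (blocks d A)) x" by (simp only: blocks_flip[OF assms(1)])
  also have "\<dots> = gg r (blocks d A) x" by (simp only: gg_insert)
  finally show ?thesis .
qed

lemma adj_le:
  assumes d1: "1 \<le> d" and r3: "3 \<le> r" and n: "d * r = n" and adj: "qadj n d r u v"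
  shows "FF d r v \<le> FF d r u + 1"
proof -
  have vu: "fst u \<subseteq> {1..n}" "snd u < r" "fst v \<subseteq> {1..n}" "snd v < r"
    using adj unfolding qadj_def qvertex_def by auto
  have fin: "finite (fst u)" using vu finite_subset by blast
  consider (flip) i where "snd v = snd u" "i \<in> {1..d}"
      "fst v = fst u - {idx n (i + d * snd u)} \<union> ({idx n (i + d * snd u)} - fst u)"
    | (ring) "fst v = fst u" "snd v = (snd u + 1) mod r \<or> snd u = (snd v + 1) mod r"
    using adj unfolding qadj_def by blast
  thus ?thesis
  proof cases
    case flip
    define c where "c = i + d * snd u"
    have "d * Suc (snd u) \<le> d * r" by (rule mult_le_mono2) (use vu in auto)
    hence cn: "1 \<le> c" "c \<le> n" using flip vu n unfolding c_def by auto
    have ic: "idx n (i + d * snd u) = c" unfolding c_def[symmetric] by (rule idx_id[OF cn])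
    have bc: "(c - 1) div d = snd u" unfolding c_def using blk[of i d "snd u"] flip(2) by auto
    have fv: "fst v = fst u - {c} \<union> ({c} - fst u)" using flip ic by simp
    have g: "gg r (blocks d (fst v)) (snd v) = gg r (blocks d (fst u)) (snd u)"
      unfolding fv flip(1) by (rule FF_flip[OF bc fin])
    have "card (fst v) \<le> card (fst u) + 1"
    proof (cases "c \<in> fst u")
      case True
      hence "fst v = fst u - {c}" using fv by auto
      thus ?thesis using card_Diff1_le[of "fst u" c] by simp
    next
      case False
      hence "fst v = insert c (fst u)" using fv by auto
      thus ?thesis using fin card_insert_le by (simp add: card_insert_if)
    qed
    thus ?thesis using g unfolding FF_def by simp
  next
    case ring
    have "\<bar>gg r (blocks d (fst u)) (snd v) - gg r (blocks d (fst u)) (snd u)\<bar> \<le> 1"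
      using ring(2) lip[OF vu(2), of "blocks d (fst u)"] lip[OF vu(4), of "blocks d (fst u)"] r3
      by (auto simp: abs_minus_commute)
    thus ?thesis unfolding FF_def ring(1) by simp
  qed
qed

lemma walk_le:
  assumes d1: "1 \<le> d" and r3: "3 \<le> r" and n: "d * r = n"
  shows "qwalk n d r k u v \<Longrightarrow> FF d r v \<le> FF d r u + int k"
proof (induction k arbitrary: u)
  case 0 thus ?case by simp
next
  case (Suc k)
  then obtain w where "qadj n d r u w" "qwalk n d r k w v" by auto
  thus ?case using Suc.IH adj_le[OF d1 r3 n] by fastforce
qed

lemma walk_app: "qwalk n d r k u w \<Longrightarrow> qadj n d r w v \<Longrightarrow> qwalk n d r (Suc k) u v"
proof (induction k arbitrary: u)
  case 0
  have "qvertex n r v" using 0(2) unfolding qadj_def by auto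
  thus ?case using 0 by (cases v) auto
next
  case (Suc k)
  then obtain w' where "qadj n d r u w'" "qwalk n d r k w' w" by auto
  have "qwalk n d r (Suc k) w' v" using Suc.IH[OF \<open>qwalk n d r k w' w\<close> Suc.prems(2)] .
  thus ?case using \<open>qadj n d r u w'\<close> by (metis qwalk.simps(2))
qed

lemma FF_start: assumes "1 \<le> r" shows "FF d r ({}, 0) = 0"
proof -
  have "r \<le> Mx {} 0 r" by (rule Mx_ge[of 0 0]) (auto simp: gapfree_def)
  moreover have "Mx {} 0 r + 0 \<le> r" by (rule Mx_le) simp
  ultimately have "Mx {} 0 r = r" by simp
  moreover have "Mx {} 0 0 = 0" using Mx_le[of 0 0 "{}"] by simp
  ultimately show ?thesis unfolding FF_def gg_def gA_def gB_def blocks_def by simp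
qed

lemma FF_nonneg: "qvertex n r v \<Longrightarrow> 0 \<le> FF d r v"
  unfolding FF_def qvertex_def using gg_nonneg[of "snd v" r] by (simp add: add_nonneg_nonneg)

lemma desc_full:
  assumes d1: "1 \<le> d" and r3: "3 \<le> r" and n: "d * r = n" and v: "qvertex n r v" and ne: "v \<noteq> ({}, 0)"
  shows "\<exists>u. qadj n d r u v \<and> FF d r u = FF d r v - 1"
proof -
  obtain a x where ax: "v = (a, x)" by force
  have a: "a \<subseteq> {1..n}" and xr: "x < r" using v ax unfolding qvertex_def by auto
  have fin: "finite a" using a finite_subset by blast
  show ?thesis
  proof (cases "\<exists>c\<in>a. (c - 1) div d = x")
    case True
    then obtain c where c: "c \<in> a" "(c - 1) div d = x" by blast
    have c1: "1 \<le> c" "c \<le> n" using c a by auto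
    define i where "i = c - d * x"
    have e: "(c - 1) div d * d + (c - 1) mod d = c - 1" by (rule div_mult_mod_eq)
    hence cm: "c - 1 = d * x + (c - 1) mod d" unfolding c(2) by (simp add: mult.commute)
    have "(c - 1) mod d < d" using d1 by simp
    hence i: "1 \<le> i" "i \<le> d" "i + d * x = c" unfolding i_def using c1 cm by auto
    have ic: "idx n (i + d * x) = c" using i(3) idx_id[OF c1] by simp
    define u where "u = (a - {c}, x)"
    have qa: "qadj n d r u v"
      unfolding qadj_def qvertex_def u_def ax using a xr i ic c(1) by (auto intro!: bexI[of _ i])
    have "gg r (blocks d (a - {c} - {c} \<union> ({c} - (a - {c})))) x = gg r (blocks d (a - {c})) x"
      by (rule FF_flip[OF c(2)]) (use fin in auto)
    moreover have "a - {c} - {c} \<union> ({c} - (a - {c})) = a" using c by auto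
    ultimately have "gg r (blocks d (a - {c})) x = gg r (blocks d a) x" by simp
    moreover have "card (a - {c}) = card a - 1" using c fin by simp
    moreover have "card a > 0" using c fin card_gt_0_iff by blast
    ultimately have "FF d r u = FF d r v - 1" unfolding FF_def u_def ax by simp
    thus ?thesis using qa by blast
  next
    case False
    hence xP: "x \<notin> blocks d a" unfolding blocks_def by auto
    have nt: "\<not> (blocks d a = {} \<and> x = 0)" using ne ax unfolding blocks_def by auto
    obtain x' where x': "x' < r" "x' = (x+1) mod r \<or> x = (x'+1) mod r"
        "gg r (blocks d a) x' \<le> gg r (blocks d a) x - 1"
      using descent[OF xr r3 xP blocks_sub[OF a n d1] nt] by blast
    have "\<bar>gg r (blocks d a) x' - gg r (blocks d a) x\<bar> \<le> 1"
      using x'(2) lip[OF xr, of "blocks d a"] lip[OF x'(1), of "blocks d a"] r3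
      by (auto simp: abs_minus_commute)
    hence "gg r (blocks d a) x' = gg r (blocks d a) x - 1" using x'(3) by linarith
    hence "FF d r (a, x') = FF d r v - 1" unfolding FF_def ax by simp
    moreover have "qadj n d r (a, x') v" unfolding qadj_def qvertex_def ax using a xr x' by auto
    ultimately show ?thesis by blast
  qed
qed

lemma walk_ex:
  assumes d1: "1 \<le> d" and r3: "3 \<le> r" and n: "d * r = n"
  shows "qvertex n r v \<Longrightarrow> FF d r v = int m \<Longrightarrow> qwalk n d r m ({}, 0) v"
proof (induction m arbitrary: v)
  case 0
  show ?case
  proof (cases "v = ({}, 0)")
    case True thus ?thesis using 0 r3 by (simp add: qvertex_def)
  next
    case False
    then obtain u where "qadj n d r u v" "FF d r u = FF d r v - 1" using desc_full[OF d1 r3 n 0(1)] by blast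
    moreover have "qvertex n r u" using calculation(1) unfolding qadj_def by auto
    ultimately show ?thesis using FF_nonneg[of n r u d] 0 by simp
  qed
next
  case (Suc m)
  have "v \<noteq> ({}, 0)" using Suc.prems FF_start[of r d] r3 by auto
  then obtain u where u: "qadj n d r u v" "FF d r u = FF d r v - 1" using desc_full[OF d1 r3 n Suc.prems(1)] by blast
  have "qvertex n r u" using u(1) unfolding qadj_def by auto
  hence "qwalk n d r m ({}, 0) u" using Suc.IH u(2) Suc.prems(2) by simp
  thus ?case using walk_app u(1) by blast
qed


theorem mainTheorem7:
  fixes n d r x :: nat and a :: "nat set"
  assumes "n \<ge> 2" and "d \<ge> 1" and "r \<ge> 3" and "d * r = n"
    and "a \<subseteq> {1..n}" and "x < r"
  shows "int (qdist n d r ({}, 0) (a, x)) =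
           int (card a) + min (int r + int x - 2 * int (leap1 d r a x))
                              (2 * int r - int x - 2 * int (leap2 d r a x))"
proof -
  have fa: "finite a" using assms(5) finite_subset by blast
  have B: "blocks d a \<subseteq> {..<r}" by (rule blocks_sub[OF assms(5) assms(4) assms(2)])
  have l1: "leap1 d r a x = Mx (blocks d a) 0 x" by (rule leap1_eq[OF fa B assms(6)])
  have l2: "leap2 d r a x = Mx (blocks d a) x r" by (rule leap2_eq[OF fa B assms(6)])
  define F where "F = FF d r (a, x)"
  have rhs: "int (card a) + min (int r + int x - 2 * int (leap1 d r a x))
                              (2 * int r - int x - 2 * int (leap2 d r a x)) = F"
    unfolding F_def FF_def gg_def gA_def gB_def l1 l2 by simp
  have v: "qvertex n r (a, x)" unfolding qvertex_def using assms by auto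
  have F0: "0 \<le> F" unfolding F_def by (rule FF_nonneg[OF v])
  have w: "qwalk n d r (nat F) ({}, 0) (a, x)"
    by (rule walk_ex[OF assms(2) assms(3) assms(4) v]) (use F0 F_def in simp)
  have low: "nat F \<le> k" if "qwalk n d r k ({}, 0) (a, x)" for k
    using walk_le[OF assms(2) assms(3) assms(4) that] FF_start[of r d] assms(3) F_def by simp
  have "qdist n d r ({}, 0) (a, x) = nat F"
    unfolding qdist_def by (rule Least_equality) (use w low in auto)
  thus ?thesis using rhs F0 by simp
qed

end
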